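(* For any abstract path $\tau$, $w(\tau)=1+O(\tau)+B(\tau)-s_1(\tau)-u_2(\tau)$.
   Context: $\mathbb F=\{0,1\}$, $\mathbb N=\{0,1,2,\dots\}$. Abstract vertex types: $o$ (interior), $u$ (unstable), $s$ (stable). An abstract edge is $\varepsilon=(\mu,(o_1,u_1,s_1),(o_2,u_2,s_2))\in\mathbb F\times\mathbb N^3\times\mathbb N^3$ with: if $\mu=0$ then $s_1=u_2=0$; if $\mu=1$ then $o_1=o_2=0$ (interior if $\mu=0$, boundary if $\mu=1$). Weight: $w(\varepsilon)=1$ if $\mu=0$, $2-s_1-u_2$ if $\mu=1$. An abstract path $\tau=(T,\tau,\sigma)$: a non-empty finite directed tree $T=(V,E)$ (nodes; arrows, or breaks), $\tau:V\to$ abstract edges, $\sigma:E\to\{o,u,s\}$, such that for each node $v$ and type $X$, $X_1(v)\ge|\{e:t(e)=v,\sigma(e)=X\}|$ and $X_2(v)\ge|\{e:s(e)=v,\sigma(e)=X\}|$, with $X_i(v)$ the entries of $\tau(v)$. Ends: $X_1(\tau)=\sum_vX_1(v)-|\sigma^{-1}(X)|$, $X_2(\tau)=\sum_vX_2(v)-|\sigma^{-1}(X)|$ (so $s_1(\tau)$ is the number of incoming stable ends, $u_2(\tau)$ of outgoing unstable ends). Weight $w(\tau)=\sum_vw(\tau(v))$. $O(\tau)=|\sigma^{-1}(o)|$ and $B(\tau)$ is the number of nodes $v$ with $\mu(v)=1$. *)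

theory Defs
  imports Main
begin

text \<open>Abstract vertex types: o (interior), u (unstable), s (stable).\<close>
datatype vtype = Ov | Uv | Sv

text \<open>An abstract edge (mu, (o1,u1,s1), (o2,u2,s2)); the triples are encoded as
  functions vtype => nat, so X_1 = e1 X and X_2 = e2 X.\<close>
type_synonym abs_edge = "nat \<times> (vtype \<Rightarrow> nat) \<times> (vtype \<Rightarrow> nat)"

definition emu :: "abs_edge \<Rightarrow> nat" where "emu \<epsilon> = fst \<epsilon>"
definition end1 :: "abs_edge \<Rightarrow> vtype \<Rightarrow> nat" where "end1 \<epsilon> = fst (snd \<epsilon>)"
definition end2 :: "abs_edge \<Rightarrow> vtype \<Rightarrow> nat" where "end2 \<epsilon> = snd (snd \<epsilon>)"

definition abs_edge_ok :: "abs_edge \<Rightarrow> bool" where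
  "abs_edge_ok \<epsilon> \<longleftrightarrow> emu \<epsilon> \<in> {0,1}
     \<and> (emu \<epsilon> = 0 \<longrightarrow> end1 \<epsilon> Sv = 0 \<and> end2 \<epsilon> Uv = 0)
     \<and> (emu \<epsilon> = 1 \<longrightarrow> end1 \<epsilon> Ov = 0 \<and> end2 \<epsilon> Ov = 0)"

definition edge_weight :: "abs_edge \<Rightarrow> int" where
  "edge_weight \<epsilon> = (if emu \<epsilon> = 0 then 1 else 2 - int (end1 \<epsilon> Sv) - int (end2 \<epsilon> Uv))"

definition reach :: "('e \<Rightarrow> 'v) \<Rightarrow> ('e \<Rightarrow> 'v) \<Rightarrow> 'e set \<Rightarrow> ('v \<times> 'v) set" where
  "reach src tgt F = (\<Union>e\<in>F. {(src e, tgt e), (tgt e, src e)})\<^sup>*"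

definition directed_tree :: "'v set \<Rightarrow> 'e set \<Rightarrow> ('e \<Rightarrow> 'v) \<Rightarrow> ('e \<Rightarrow> 'v) \<Rightarrow> bool" where
  "directed_tree V E src tgt \<longleftrightarrow> finite V \<and> V \<noteq> {} \<and> finite E
     \<and> (\<forall>e\<in>E. src e \<in> V \<and> tgt e \<in> V)
     \<and> (\<forall>x\<in>V. \<forall>y\<in>V. (x, y) \<in> reach src tgt E)
     \<and> (\<forall>e\<in>E. (src e, tgt e) \<notin> reach src tgt (E - {e}))"

definition abstract_path ::
  "'v set \<Rightarrow> 'e set \<Rightarrow> ('e \<Rightarrow> 'v) \<Rightarrow> ('e \<Rightarrow> 'v) \<Rightarrow> ('v \<Rightarrow> abs_edge) \<Rightarrow> ('e \<Rightarrow> vtype) \<Rightarrow> bool" where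
  "abstract_path V E src tgt \<tau> \<sigma> \<longleftrightarrow> directed_tree V E src tgt
     \<and> (\<forall>v\<in>V. abs_edge_ok (\<tau> v))
     \<and> (\<forall>v\<in>V. \<forall>X. end1 (\<tau> v) X \<ge> card {e\<in>E. tgt e = v \<and> \<sigma> e = X}
                 \<and> end2 (\<tau> v) X \<ge> card {e\<in>E. src e = v \<and> \<sigma> e = X})"

definition path_end1 :: "'v set \<Rightarrow> 'e set \<Rightarrow> ('v \<Rightarrow> abs_edge) \<Rightarrow> ('e \<Rightarrow> vtype) \<Rightarrow> vtype \<Rightarrow> int" where
  "path_end1 V E \<tau> \<sigma> X = (\<Sum>v\<in>V. int (end1 (\<tau> v) X)) - int (card {e\<in>E. \<sigma> e = X})"

definition path_end2 :: "'v set \<Rightarrow> 'e set \<Rightarrow> ('v \<Rightarrow> abs_edge) \<Rightarrow> ('e \<Rightarrow> vtype) \<Rightarrow> vtype \<Rightarrow> int" where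
  "path_end2 V E \<tau> \<sigma> X = (\<Sum>v\<in>V. int (end2 (\<tau> v) X)) - int (card {e\<in>E. \<sigma> e = X})"

definition path_weight :: "'v set \<Rightarrow> ('v \<Rightarrow> abs_edge) \<Rightarrow> int" where
  "path_weight V \<tau> = (\<Sum>v\<in>V. edge_weight (\<tau> v))"

definition path_O :: "'e set \<Rightarrow> ('e \<Rightarrow> vtype) \<Rightarrow> nat" where
  "path_O E \<sigma> = card {e\<in>E. \<sigma> e = Ov}"

definition path_B :: "'v set \<Rightarrow> ('v \<Rightarrow> abs_edge) \<Rightarrow> nat" where
  "path_B V \<tau> = card {v\<in>V. emu (\<tau> v) = 1}"

end

theory Submission
  imports Defs
begin

lemma reach_mono: "F \<subseteq> G \<Longrightarrow> reach src tgt F \<subseteq> reach src tgt G"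
  unfolding reach_def by (rule rtrancl_mono) blast

lemma reach_sym: "(x,y) \<in> reach src tgt F \<Longrightarrow> (y,x) \<in> reach src tgt F"
proof -
  have "sym (\<Union>e\<in>F. {(src e, tgt e), (tgt e, src e)})" unfolding sym_def by blast
  hence "sym (reach src tgt F)" unfolding reach_def by (rule sym_rtrancl)
  thus "(x,y) \<in> reach src tgt F \<Longrightarrow> (y,x) \<in> reach src tgt F" unfolding sym_def by blast
qed

lemma reach_trans: "(x,y) \<in> reach src tgt F \<Longrightarrow> (y,z) \<in> reach src tgt F \<Longrightarrow> (x,z) \<in> reach src tgt F"
  unfolding reach_def by (rule rtrancl_trans)

lemma reach_refl: "(x,x) \<in> reach src tgt F"
  unfolding reach_def by simp

lemma reach_in_V:
  assumes "\<forall>e\<in>F. src e \<in> V \<and> tgt e \<in> V" "(x,y) \<in> reach src tgt F" "x \<in> V"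
  shows "y \<in> V"
  using assms(2,3) unfolding reach_def
  by (induction rule: rtrancl_induct) (use assms(1) in auto)

lemma reach_empty: "reach src tgt {} = Id"
  unfolding reach_def by simp

lemma reach_insert:
  assumes nab: "(src e, tgt e) \<notin> reach src tgt F"
  defines "A \<equiv> reach src tgt F `` {src e}" and "B \<equiv> reach src tgt F `` {tgt e}"
  shows "reach src tgt (insert e F) = reach src tgt F \<union> (A \<union> B) \<times> (A \<union> B)"
    (is "?L = ?M")
proof
  let ?R = "reach src tgt F"
  show "?M \<subseteq> ?L"
  proof
    fix p assume "p \<in> ?M"
    then obtain x y where p: "p = (x,y)" and xy: "(x,y) \<in> ?R \<or> (x \<in> A \<union> B \<and> y \<in> A \<union> B)" by (cases p) auto
    have RL: "?R \<subseteq> ?L" by (rule reach_mono) blast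
    have ab: "(src e, tgt e) \<in> ?L" "(tgt e, src e) \<in> ?L" unfolding reach_def by auto
    have "(x,y) \<in> ?L"
    proof (cases "(x,y) \<in> ?R")
      case True thus ?thesis using RL by blast
    next
      case False
      hence xyAB: "x \<in> A \<union> B" "y \<in> A \<union> B" using xy by auto
      have RL': "\<And>p q. (p,q) \<in> ?R \<Longrightarrow> (p,q) \<in> ?L" using RL by blast
      have xa: "(x, src e) \<in> ?L \<or> (x, tgt e) \<in> ?L"
      proof (cases "x \<in> A")
        case True
        hence "(src e, x) \<in> ?R" unfolding A_def by simp
        thus ?thesis by (metis RL' reach_sym)
      next
        case False
        hence "x \<in> B" using xyAB(1) by simp
        hence "(tgt e, x) \<in> ?R" unfolding B_def by simp
        thus ?thesis by (metis RL' reach_sym)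
      qed
      have ya: "(src e, y) \<in> ?L \<or> (tgt e, y) \<in> ?L"
      proof (cases "y \<in> A")
        case True
        hence "(src e, y) \<in> ?R" unfolding A_def by simp
        thus ?thesis by (metis RL')
      next
        case False
        hence "y \<in> B" using xyAB(2) by simp
        hence "(tgt e, y) \<in> ?R" unfolding B_def by simp
        thus ?thesis by (metis RL')
      qed
      show ?thesis
      proof -
        have t: "\<And>a b c. (a,b) \<in> ?L \<Longrightarrow> (b,c) \<in> ?L \<Longrightarrow> (a,c) \<in> ?L" by (rule reach_trans)
        from xa ya show ?thesis using t ab by blast
      qed
    qed
    thus "p \<in> ?L" using p by simp
  qed
next
  let ?R = "reach src tgt F"
  have Aclosed: "\<And>x y. x \<in> A \<Longrightarrow> (x,y) \<in> ?R \<Longrightarrow> y \<in> A"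
    unfolding A_def using reach_trans by fastforce
  have Bclosed: "\<And>x y. x \<in> B \<Longrightarrow> (x,y) \<in> ?R \<Longrightarrow> y \<in> B"
    unfolding B_def using reach_trans by fastforce
  have Aclosed': "\<And>x y. y \<in> A \<Longrightarrow> (x,y) \<in> ?R \<Longrightarrow> x \<in> A"
    using Aclosed reach_sym by metis
  have Bclosed': "\<And>x y. y \<in> B \<Longrightarrow> (x,y) \<in> ?R \<Longrightarrow> x \<in> B"
    using Bclosed reach_sym by metis
  have aA: "src e \<in> A" and bB: "tgt e \<in> B" unfolding A_def B_def using reach_refl by auto
  have transM: "\<And>x y z. (x,y) \<in> ?M \<Longrightarrow> (y,z) \<in> ?M \<Longrightarrow> (x,z) \<in> ?M"
  proof -
    fix x y z assume 1: "(x,y) \<in> ?M" and 2: "(y,z) \<in> ?M"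
    show "(x,z) \<in> ?M"
    proof (cases "(x,y) \<in> ?R")
      case True
      show ?thesis
      proof (cases "(y,z) \<in> ?R")
        case True
        hence "(x,z) \<in> ?R" by (rule reach_trans[OF \<open>(x,y) \<in> ?R\<close>])
        thus ?thesis by simp
      next
        case False
        hence "y \<in> A \<union> B" "z \<in> A \<union> B" using 2 by auto
        hence "x \<in> A \<union> B" using True Aclosed' Bclosed' by blast
        thus ?thesis using \<open>z \<in> A \<union> B\<close> by blast
      qed
    next
      case False
      hence xy: "x \<in> A \<union> B" "y \<in> A \<union> B" using 1 by auto
      have "z \<in> A \<union> B" using 2 xy(2) Aclosed Bclosed by blast
      thus ?thesis using xy by blast
    qed
  qed
  show "?L \<subseteq> ?M"
  proof
    fix p assume "p \<in> ?L"
    then obtain x y where p: "p = (x,y)" and "(x,y) \<in> ?L" by (cases p) auto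
    from this(2) have "(x,y) \<in> (\<Union>e\<in>insert e F. {(src e, tgt e), (tgt e, src e)})\<^sup>*" unfolding reach_def .
    hence "(x,y) \<in> ?M"
    proof (induction rule: rtrancl_induct)
      case base show ?case by (simp add: reach_refl)
    next
      case (step y z)
      have "(y,z) \<in> ?M"
      proof -
        from step(2) obtain f where f: "f \<in> insert e F"
          and yz: "(y,z) = (src f, tgt f) \<or> (y,z) = (tgt f, src f)" by blast
        show ?thesis
        proof (cases "f = e")
          case True thus ?thesis using yz aA bB by auto
        next
          case False
          hence "f \<in> F" using f by simp
          hence "(y,z) \<in> ?R" using yz unfolding reach_def by blast
          thus ?thesis by blast
        qed
      qed
      thus ?case using transM step(3) by blast
    qed
    thus "p \<in> ?M" using p by simp
  qed
qed

definition K :: "'v set \<Rightarrow> ('e \<Rightarrow> 'v) \<Rightarrow> ('e \<Rightarrow> 'v) \<Rightarrow> 'e set \<Rightarrow> 'v set set" where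
  "K V src tgt F = (\<lambda>v. reach src tgt F `` {v}) ` V"

lemma class_eq:
  "reach src tgt F `` {x} = reach src tgt F `` {y} \<longleftrightarrow> (x,y) \<in> reach src tgt F"
proof
  assume h: "reach src tgt F `` {x} = reach src tgt F `` {y}"
  have "y \<in> reach src tgt F `` {y}" by (simp add: reach_refl)
  hence "(x,y) \<in> reach src tgt F" using h by blast
  thus "(x,y) \<in> reach src tgt F" .
next
  assume h: "(x,y) \<in> reach src tgt F"
  hence h': "(y,x) \<in> reach src tgt F" by (rule reach_sym)
  show "reach src tgt F `` {x} = reach src tgt F `` {y}"
    using reach_trans[OF h] reach_trans[OF h'] by blast
qed

lemma class_mem:
  "v \<in> reach src tgt F `` {a} \<Longrightarrow> reach src tgt F `` {v} = reach src tgt F `` {a}"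
  using class_eq[of src tgt F v a] reach_sym[of a v src tgt F] by simp

lemma K_count:
  assumes fin: "finite V" and fE: "finite E" and ends: "\<forall>e\<in>E. src e \<in> V \<and> tgt e \<in> V"
    and acyc: "\<forall>e\<in>E. (src e, tgt e) \<notin> reach src tgt (E - {e})"
    and FE: "F \<subseteq> E"
  shows "card (K V src tgt F) + card F = card V"
  using finite_subset[OF FE fE] FE
proof (induction F rule: finite_subset_induct')
  case empty
  have "K V src tgt {} = (\<lambda>v. {v}) ` V" unfolding K_def reach_empty by auto
  moreover have "card ((\<lambda>v. {v}) ` V) = card V" by (rule card_image) (auto simp: inj_on_def)
  ultimately show ?case by simp
next
  case (insert e F)
  let ?R = "reach src tgt F"
  define A where "A = ?R `` {src e}"
  define B where "B = ?R `` {tgt e}"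
  have "F \<subseteq> E - {e}" using insert(3,4) by blast
  hence sub: "?R \<subseteq> reach src tgt (E - {e})" by (rule reach_mono)
  have "(src e, tgt e) \<notin> reach src tgt (E - {e})" using acyc insert(2) by blast
  hence nab: "(src e, tgt e) \<notin> ?R" using sub by blast
  have RI: "reach src tgt (insert e F) = ?R \<union> (A \<union> B) \<times> (A \<union> B)"
    using reach_insert[OF nab] unfolding A_def B_def by simp
  have Fends: "\<forall>f\<in>F. src f \<in> V \<and> tgt f \<in> V" using ends insert(3) by blast
  have cls: "\<And>v. reach src tgt (insert e F) `` {v} = (if v \<in> A \<union> B then A \<union> B else ?R `` {v})"
  proof -
    fix v
    show "reach src tgt (insert e F) `` {v} = (if v \<in> A \<union> B then A \<union> B else ?R `` {v})"
    proof (cases "v \<in> A \<union> B")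
      case True
      have "?R `` {v} \<subseteq> A \<union> B"
        using True unfolding A_def B_def by (auto intro: reach_trans)
      thus ?thesis using True RI by auto
    next
      case False thus ?thesis using RI by auto
    qed
  qed
  have AK: "A \<in> K V src tgt F" "B \<in> K V src tgt F"
    unfolding K_def A_def B_def using ends insert(2) by auto
  have AB: "A \<noteq> B" using nab class_eq unfolding A_def B_def by metis
  have Knew: "K V src tgt (insert e F) = insert (A \<union> B) (K V src tgt F - {A, B})"
  proof
    show "K V src tgt (insert e F) \<subseteq> insert (A \<union> B) (K V src tgt F - {A, B})"
    proof
      fix C assume "C \<in> K V src tgt (insert e F)"
      then obtain v where v: "v \<in> V" "C = reach src tgt (insert e F) `` {v}" unfolding K_def by auto
      show "C \<in> insert (A \<union> B) (K V src tgt F - {A, B})"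
      proof (cases "v \<in> A \<union> B")
        case True thus ?thesis using v cls by simp
      next
        case False
        hence C: "C = ?R `` {v}" using v cls by simp
        have "v \<in> C" using C by (simp add: reach_refl)
        hence "C \<noteq> A" "C \<noteq> B" using False by auto
        thus ?thesis using C v(1) unfolding K_def by auto
      qed
    qed
  next
    show "insert (A \<union> B) (K V src tgt F - {A, B}) \<subseteq> K V src tgt (insert e F)"
    proof
      fix C assume C: "C \<in> insert (A \<union> B) (K V src tgt F - {A, B})"
      show "C \<in> K V src tgt (insert e F)"
      proof (cases "C = A \<union> B")
        case True
        have "src e \<in> A" unfolding A_def by (simp add: reach_refl)
        hence "reach src tgt (insert e F) `` {src e} = C" using cls True by simp
        thus ?thesis unfolding K_def using ends insert(2) by force
      next
        case False
        then obtain v where v: "v \<in> V" "C = ?R `` {v}" "C \<noteq> A" "C \<noteq> B"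
          using C unfolding K_def by auto
        have "v \<notin> A" using v class_mem unfolding A_def by metis
        moreover have "v \<notin> B" using v class_mem unfolding B_def by metis
        ultimately have "reach src tgt (insert e F) `` {v} = C" using cls v by simp
        thus ?thesis unfolding K_def using v(1) by force
      qed
    qed
  qed
  have finK: "finite (K V src tgt F)" unfolding K_def using fin by simp
  have notin: "A \<union> B \<notin> K V src tgt F - {A, B}"
  proof
    assume "A \<union> B \<in> K V src tgt F - {A, B}"
    then obtain v where v: "v \<in> V" "A \<union> B = ?R `` {v}" "A \<union> B \<noteq> A" unfolding K_def by auto
    have "src e \<in> A" unfolding A_def by (simp add: reach_refl)
    hence "src e \<in> ?R `` {v}" using v(2) by blast
    hence "?R `` {src e} = ?R `` {v}" by (rule class_mem)
    hence "?R `` {v} = A" unfolding A_def by simp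
    thus False using v by simp
  qed
  have "card (K V src tgt (insert e F)) = card (K V src tgt F - {A, B}) + 1"
    unfolding Knew using notin finK by simp
  also have "card (K V src tgt F - {A, B}) = card (K V src tgt F) - 2"
    using AK AB finK by (simp add: card_Diff_subset)
  finally have "card (K V src tgt (insert e F)) = card (K V src tgt F) - 1"
    using AK AB finK card_mono[OF finK, of "{A,B}"] by simp
  moreover have "card (K V src tgt F) \<ge> 2" using AK AB finK card_mono[OF finK, of "{A,B}"] by simp
  ultimately show ?case using insert by simp
qed

lemma tree_card:
  assumes "directed_tree V E src tgt"
  shows "card V = card E + 1"
proof -
  have d: "finite V" "V \<noteq> {}" "finite E" "\<forall>e\<in>E. src e \<in> V \<and> tgt e \<in> V"
    "\<forall>x\<in>V. \<forall>y\<in>V. (x, y) \<in> reach src tgt E" "\<forall>e\<in>E. (src e, tgt e) \<notin> reach src tgt (E - {e})"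
    using assms unfolding directed_tree_def by auto
  have c: "card (K V src tgt E) + card E = card V" using K_count[OF d(1,3,4,6)] by simp
  have "K V src tgt E = {V}"
  proof -
    have "\<And>v. v \<in> V \<Longrightarrow> reach src tgt E `` {v} = V"
      using d(4,5) reach_in_V[where F=E and V=V] by blast
    thus ?thesis unfolding K_def using d(2) by auto
  qed
  thus ?thesis using c by simp
qed

lemma card_split3:
  assumes "finite E"
  shows "card E = card {e\<in>E. \<sigma> e = Ov} + card {e\<in>E. \<sigma> e = Uv} + card {e\<in>E. \<sigma> e = Sv}"
proof -
  have "E = {e\<in>E. \<sigma> e = Ov} \<union> ({e\<in>E. \<sigma> e = Uv} \<union> {e\<in>E. \<sigma> e = Sv})"
    by (auto intro: vtype.exhaust)
  hence "card E = card ({e\<in>E. \<sigma> e = Ov} \<union> ({e\<in>E. \<sigma> e = Uv} \<union> {e\<in>E. \<sigma> e = Sv}))" by simp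
  also have "\<dots> = card {e\<in>E. \<sigma> e = Ov} + card ({e\<in>E. \<sigma> e = Uv} \<union> {e\<in>E. \<sigma> e = Sv})"
    by (rule card_Un_disjoint) (use assms in auto)
  also have "card ({e\<in>E. \<sigma> e = Uv} \<union> {e\<in>E. \<sigma> e = Sv}) = card {e\<in>E. \<sigma> e = Uv} + card {e\<in>E. \<sigma> e = Sv}"
    by (rule card_Un_disjoint) (use assms in auto)
  finally show ?thesis by simp
qed

theorem corollary3p12:
  fixes V :: "'v set" and E :: "'e set" and src tgt :: "'e \<Rightarrow> 'v"
    and \<tau> :: "'v \<Rightarrow> abs_edge" and \<sigma> :: "'e \<Rightarrow> vtype"
  assumes "abstract_path V E src tgt \<tau> \<sigma>"
  shows "path_weight V \<tau> = 1 + int (path_O E \<sigma>) + int (path_B V \<tau>)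
           - path_end1 V E \<tau> \<sigma> Sv - path_end2 V E \<tau> \<sigma> Uv"
proof -
  have dt: "directed_tree V E src tgt" and ok: "\<forall>v\<in>V. abs_edge_ok (\<tau> v)"
    using assms unfolding abstract_path_def by auto
  have fV: "finite V" and fE: "finite E" using dt unfolding directed_tree_def by auto
  have cV: "card V = card E + 1" by (rule tree_card[OF dt])
  have w: "\<And>v. v \<in> V \<Longrightarrow> edge_weight (\<tau> v) = 1 + (if emu (\<tau> v) = 1 then 1 else 0)
              - int (end1 (\<tau> v) Sv) - int (end2 (\<tau> v) Uv)"
    using ok unfolding abs_edge_ok_def edge_weight_def by auto
  have "path_weight V \<tau> = (\<Sum>v\<in>V. 1 + (if emu (\<tau> v) = 1 then 1 else 0)
              - int (end1 (\<tau> v) Sv) - int (end2 (\<tau> v) Uv))"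
    unfolding path_weight_def using w by (rule sum.cong[OF refl])
  also have "\<dots> = int (card V) + (\<Sum>v\<in>V. (if emu (\<tau> v) = 1 then 1 else 0))
       - (\<Sum>v\<in>V. int (end1 (\<tau> v) Sv)) - (\<Sum>v\<in>V. int (end2 (\<tau> v) Uv))"
    by (simp add: sum.distrib sum_subtractf)
  also have "(\<Sum>v\<in>V. (if emu (\<tau> v) = 1 then 1 else 0 :: int)) = int (path_B V \<tau>)"
    unfolding path_B_def using fV by (simp add: sum.If_cases Int_def)
  finally show ?thesis
    unfolding path_end1_def path_end2_def path_O_def
    using cV card_split3[OF fE, of \<sigma>] by simp
qed

end
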